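(* Let $N\ge1$ and let $\mathbf U$ be an $N\times N$ unitary-like matrix with rows $\mathbf u^0,\dots,\mathbf u^{N-1}$; let $\mathbb A=\{\mathbf u^0,\dots,\mathbf u^{N-1}\}$ (a set of $N$ sequences of length $N$). Partition $\mathbb A$ arbitrarily into nonempty subsets $\mathbb A^{(0)},\dots,\mathbb A^{(P-1)}$, and index the elements of each subset arbitrarily as $\mathbb A^{(p)}=(\mathbf a^{(p)}_0,\dots,\mathbf a^{(p)}_{n_p-1})$ with $n_p=|\mathbb A^{(p)}|$. For each $p$, choose an arbitrary $n_p\times n_p$ unitary-like matrix $\mathbf U^{(p)}$ with rows $\mathbf u^{(p),0},\dots,\mathbf u^{(p),n_p-1}$. For $0\le p<P$ and $0\le m<n_p$ define the sequence $$\mathbf s^{(p,m)}=\mathbf u^{(p),m}\odot\mathbb A^{(p)}=\big(u^{(p),m}_0\mathbf a^{(p)}_0\ \ u^{(p),m}_1\mathbf a^{(p)}_1\ \cdots\ u^{(p),m}_{n_p-1}\mathbf a^{(p)}_{n_p-1}\big)$$ of length $n_pN$. Then the family of the $N$ sequences $\{\mathbf s^{(p,m)}: 0\le p<P,\ 0\le m<n_p\}$ is an optimal $(N,1,\mathbb L)$-$N$-CO-SF, where $\mathbb L$ is the set of distinct values among $\{n_pN\}_{p}$.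
   Context: All sequences are finite complex sequences. A sequence $\mathbf s=(s_0,\dots,s_{L-1})$ of length $L$ is identified with the function $s:\mathbb Z\to\mathbb C$ given by $s(n)=s_n$ for $0\le n<L$ and $s(n)=0$ otherwise. For sequences $\mathbf s,\mathbf s'$ of lengths $L,L'$ (possibly different), the aperiodic correlation is $R_{\mathbf s,\mathbf s'}(\tau)=\sum_{l=0}^{L-1}s(l)\,\overline{s'(l+\tau)}$ for $\tau\in\mathbb Z$. The energy of $\mathbf s$ is $E_{\mathbf s}=R_{\mathbf s,\mathbf s}(0)$. An $(M,1,\mathbb L)$-$N$-shift cross-orthogonal sequence family ($N$-CO-SF) is an indexed family $(\mathbf s^0,\dots,\mathbf s^{M-1})$ of complex sequences, where $\mathbf s^m$ has length $L^{(m)}$ divisible by $N$, and $\mathbb L$ is the set of distinct values among $L^{(0)},\dots,L^{(M-1)}$, such that for all $0\le m,m'<M$ and all $k\in\mathbb Z$, $R_{\mathbf s^m,\mathbf s^{m'}}(kN)=E_{\mathbf s^m}\,\delta(m-m')\,\delta(k)$, where $\delta$ is the Kronecker delta. An $(M,1,\mathbb L)$-$N$-CO-SF is called optimal if $M=N$. An $n\times n$ complex matrix $\mathbf U$ is unitary-like if $\mathbf U\mathbf U^H=\mathbf U^H\mathbf U=\alpha\mathbf I_n$ for some real $\alpha>0$. Connection operator: for a vector $\mathbf v=(v_0,\dots,v_{K'-1})$ and an indexed set $\mathbb A=(\mathbf a_0,\dots,\mathbf a_{M-1})$ of $M$ sequences of common length $L$, with $K=\mathrm{lcm}(M,K')$,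 $\mathbf v\odot\mathbb A$ is the length-$KL$ concatenation $\big(v_{[k]_{K'}}\mathbf a_{[k]_M}\big)_{k=0}^{K-1}$, where $[a]_b$ is the remainder of $a$ modulo $b$. *)

theory Defs
  imports Complex_Main
begin

text \<open>A finite complex sequence is a list; it is extended by zero outside its support.\<close>
definition seqval :: "complex list \<Rightarrow> int \<Rightarrow> complex" where
  "seqval xs n = (if 0 \<le> n \<and> n < int (length xs) then xs ! nat n else 0)"

definition acorr :: "complex list \<Rightarrow> complex list \<Rightarrow> int \<Rightarrow> complex" where
  "acorr s s' \<tau> = (\<Sum>l<length s. seqval s (int l) * cnj (seqval s' (int l + \<tau>)))"

definition energy :: "complex list \<Rightarrow> complex" where
  "energy s = acorr s s 0"

definition is_CO_SF :: "nat \<Rightarrow> nat \<Rightarrow> nat set \<Rightarrow> complex list list \<Rightarrow> bool" where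
  "is_CO_SF N M Ls fam \<longleftrightarrow>
     length fam = M \<and>
     (\<forall>s\<in>set fam. N dvd length s) \<and>
     Ls = set (map length fam) \<and>
     (\<forall>m<M. \<forall>m'<M. \<forall>k::int.
        acorr (fam ! m) (fam ! m') (k * int N) =
          (if m = m' \<and> k = 0 then energy (fam ! m) else 0))"

definition is_optimal_CO_SF :: "nat \<Rightarrow> nat \<Rightarrow> nat set \<Rightarrow> complex list list \<Rightarrow> bool" where
  "is_optimal_CO_SF N M Ls fam \<longleftrightarrow> is_CO_SF N M Ls fam \<and> M = N"

definition unitary_like :: "nat \<Rightarrow> (nat \<Rightarrow> nat \<Rightarrow> complex) \<Rightarrow> bool" where
  "unitary_like n U \<longleftrightarrow> (\<exists>\<alpha>::real. \<alpha> > 0 \<and>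
     (\<forall>i<n. \<forall>j<n. (\<Sum>k<n. U i k * cnj (U j k)) = (if i = j then complex_of_real \<alpha> else 0)) \<and>
     (\<forall>i<n. \<forall>j<n. (\<Sum>k<n. cnj (U k i) * U k j) = (if i = j then complex_of_real \<alpha> else 0)))"

definition mat_row :: "nat \<Rightarrow> (nat \<Rightarrow> nat \<Rightarrow> complex) \<Rightarrow> nat \<Rightarrow> complex list" where
  "mat_row n U i = map (\<lambda>k. U i k) [0..<n]"

definition connect :: "complex list \<Rightarrow> complex list list \<Rightarrow> complex list" where
  "connect v A = concat (map (\<lambda>k. map (\<lambda>x. v ! (k mod length v) * x) (A ! (k mod length A)))
                            [0..<lcm (length A) (length v)])"

end

theory Submission
  imports Defs
begin

lemma concat_blocks:
  assumes "N > 0"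
  shows "concat (map (\<lambda>a. map (h a) [0..<N]) [0..<K]) = map (\<lambda>l. h (l div N) (l mod N)) [0..<K*N]"
proof (induction K)
  case 0 then show ?case by simp
next
  case (Suc K)
  have "[0..<Suc K * N] = [0..<K*N] @ map (\<lambda>i. i + K*N) [0..<N]"
  proof -
    have "[0..<K*N+N] = [0..<K*N] @ [K*N..<K*N+N]" by (rule upt_add_eq_append) simp
    moreover have "[K*N..<K*N+N] = map (\<lambda>i. i + K*N) [0..<N]" by (simp add: map_add_upt add.commute)
    ultimately show ?thesis by (simp add: add.commute)
  qed
  moreover have "map (\<lambda>l. h (l div N) (l mod N)) (map (\<lambda>i. i + K*N) [0..<N]) = map (h K) [0..<N]"
    using assms by (auto intro!: map_cong)
  ultimately show ?case using Suc by simp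
qed

lemma sum_blocks:
  fixes K N :: nat shows "(\<Sum>l<K*N. f l) = (\<Sum>a<K. \<Sum>i<N. f (a*N+i))"
proof (induction K)
  case 0 then show ?case by simp
next
  case (Suc K)
  have "(\<Sum>l<Suc K*N. f l) = (\<Sum>l<K*N. f l) + (\<Sum>l\<in>{K*N..<K*N+N}. f l)"
    by (metis add.commute lessThan_atLeast0 mult_Suc le_add1 sum.atLeastLessThan_concat zero_le)
  also have "(\<Sum>l\<in>{K*N..<K*N+N}. f l) = (\<Sum>i<N. f (K*N+i))"
    using sum.shift_bounds_nat_ivl[of f 0 "K*N" N]
    by (simp add: lessThan_atLeast0 add.commute)
  finally show ?case using Suc by simp
qed

lemma seq_eq:
  assumes "n \<ge> 1" "N > 0"
  shows "connect (mat_row n W m) (map (\<lambda>j. mat_row N U (\<tau> j)) [0..<n])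
     = map (\<lambda>l. W m (l div N) * U (\<tau> (l div N)) (l mod N)) [0..<n*N]"
proof -
  have "connect (mat_row n W m) (map (\<lambda>j. mat_row N U (\<tau> j)) [0..<n])
     = concat (map (\<lambda>a. map (\<lambda>i. W m a * U (\<tau> a) i) [0..<N]) [0..<n])"
    unfolding connect_def mat_row_def by (auto intro!: arg_cong[where f=concat] map_cong)
  also have "\<dots> = map (\<lambda>l. W m (l div N) * U (\<tau> (l div N)) (l mod N)) [0..<n*N]"
    using concat_blocks[OF assms(2), of "\<lambda>a i. W m a * U (\<tau> a) i" n] by simp
  finally show ?thesis .
qed

lemma seqval_map:
  "seqval (map g [0..<L]) t = (if 0 \<le> t \<and> t < int L then g (nat t) else 0)"
  unfolding seqval_def by auto

lemma out_range:
  fixes c :: int and N L i :: nat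
  assumes "N > 0" "i < N" "\<not> (0 \<le> c \<and> c < int L)"
  shows "\<not> (0 \<le> c * int N + int i \<and> c * int N + int i < int (L * N))"
proof
  assume h: "0 \<le> c * int N + int i \<and> c * int N + int i < int (L * N)"
  show False
  proof (cases "c < 0")
    case True
    then have "c \<le> -1" by simp
    then have "c * int N \<le> -1 * int N" using assms(1) by (intro mult_right_mono) auto
    then show False using h assms(2) by simp
  next
    case False
    then have "c \<ge> int L" using assms(3) by simp
    then have "c * int N \<ge> int L * int N" using assms(1) by (intro mult_right_mono) auto
    then show False using h by simp
  qed
qed

lemma block_sum:
  fixes N :: nat and k :: int
  assumes N: "N > 0"
    and Uorth: "\<forall>i<N. \<forall>j<N. (\<Sum>k<N. U i k * cnj (U j k)) = (if i = j then complex_of_real \<alpha> else 0)"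
    and inj: "inj_on (\<lambda>(p,j). \<sigma> p j) {(p,j). p<P \<and> j < n p}"
    and rng: "\<forall>p<P. \<forall>j<n p. \<sigma> p j < N"
    and p: "p < P" "p' < P"
    and a: "a < n p"
  shows "(\<Sum>i<N. (\<lambda>l. V p m (l div N) * U (\<sigma> p (l div N)) (l mod N)) (a*N+i) *
            cnj (seqval (map (\<lambda>l. V p' m' (l div N) * U (\<sigma> p' (l div N)) (l mod N)) [0..<n p'*N])
                    (int (a*N+i) + k * int N)))
       = (if p = p' \<and> k = 0 then \<alpha> * (V p m a * cnj (V p m' a)) else 0)"
proof (cases "0 \<le> int a + k \<and> int a + k < int (n p')")
  case True
  define b where "b = nat (int a + k)"
  have b: "b < n p'" "int b = int a + k" using True by (auto simp: b_def)
  have e: "int (a*N+i) + k * int N = int (b*N+i)" for i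
    using b(2) by (simp add: algebra_simps)
  have lt: "b*N+i < n p' * N" if "i < N" for i
  proof -
    have "b*N+i < b*N + N" using that by simp
    also have "\<dots> = Suc b * N" by simp
    also have "\<dots> \<le> n p' * N" using b(1) by (intro mult_right_mono) auto
    finally show ?thesis .
  qed
  have "(\<Sum>i<N. (\<lambda>l. V p m (l div N) * U (\<sigma> p (l div N)) (l mod N)) (a*N+i) *
            cnj (seqval (map (\<lambda>l. V p' m' (l div N) * U (\<sigma> p' (l div N)) (l mod N)) [0..<n p'*N])
                    (int (a*N+i) + k * int N)))
      = (\<Sum>i<N. (V p m a * cnj (V p' m' b)) * (U (\<sigma> p a) i * cnj (U (\<sigma> p' b) i)))"
  proof (rule sum.cong[OF refl])
    fix i assume "i \<in> {..<N}"
    then have i: "i < N" by simp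
    have s1: "seqval (map (\<lambda>l. V p' m' (l div N) * U (\<sigma> p' (l div N)) (l mod N)) [0..<n p'*N])
                    (int (a*N+i) + k * int N) = V p' m' b * U (\<sigma> p' b) i"
    proof -
      have "int (b*N+i) < int (n p' * N)" using lt[OF i] by linarith
      moreover have "(b*N+i) div N = b" "(b*N+i) mod N = i" using i by auto
      ultimately show ?thesis unfolding e seqval_map nat_int
        by (simp only: if_True of_nat_0_le_iff simp_thms)
    qed
    show "(\<lambda>l. V p m (l div N) * U (\<sigma> p (l div N)) (l mod N)) (a*N+i) *
            cnj (seqval (map (\<lambda>l. V p' m' (l div N) * U (\<sigma> p' (l div N)) (l mod N)) [0..<n p'*N])
                    (int (a*N+i) + k * int N)) = (V p m a * cnj (V p' m' b)) * (U (\<sigma> p a) i * cnj (U (\<sigma> p' b) i))"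
      unfolding s1 using i by simp
  qed
  also have "\<dots> = (V p m a * cnj (V p' m' b)) * (if \<sigma> p a = \<sigma> p' b then complex_of_real \<alpha> else 0)"
    using Uorth rng p a b(1) by (simp add: sum_distrib_left[symmetric])
  also have "\<dots> = (if p = p' \<and> k = 0 then \<alpha> * (V p m a * cnj (V p m' a)) else 0)"
  proof -
    have "(\<sigma> p a = \<sigma> p' b) = ((p, a) = (p', b))"
      using inj_onD[OF inj, of "(p,a)" "(p',b)"] p a b(1) by auto
    moreover have "(a = b) = (k = 0)" using b(2) by auto
    ultimately show ?thesis by auto
  qed
  finally show ?thesis .
next
  case False
  have "seqval (map (\<lambda>l. V p' m' (l div N) * U (\<sigma> p' (l div N)) (l mod N)) [0..<n p'*N])
                    (int (a*N+i) + k * int N) = 0" if "i < N" for i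
  proof -
    have "int (a*N+i) + k * int N = (int a + k) * int N + int i" by (simp add: algebra_simps)
    then show ?thesis using out_range[OF N that False] unfolding seqval_map by (simp only: if_False)
  qed
  then have "(\<Sum>i<N. (\<lambda>l. V p m (l div N) * U (\<sigma> p (l div N)) (l mod N)) (a*N+i) *
            cnj (seqval (map (\<lambda>l. V p' m' (l div N) * U (\<sigma> p' (l div N)) (l mod N)) [0..<n p'*N])
                    (int (a*N+i) + k * int N))) = 0" by simp
  moreover have nc: "\<not> (p = p' \<and> k = 0)" using False a by auto
  ultimately show ?thesis by (simp only: nc if_False)
qed

lemma acorr_blocks:
  fixes N :: nat and k :: int
  assumes N: "N > 0"
    and Uorth: "\<forall>i<N. \<forall>j<N. (\<Sum>k<N. U i k * cnj (U j k)) = (if i = j then complex_of_real \<alpha> else 0)"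
    and inj: "inj_on (\<lambda>(p,j). \<sigma> p j) {(p,j). p<P \<and> j < n p}"
    and rng: "\<forall>p<P. \<forall>j<n p. \<sigma> p j < N"
    and p: "p < P" "p' < P"
  shows "acorr (map (\<lambda>l. V p m (l div N) * U (\<sigma> p (l div N)) (l mod N)) [0..<n p*N])
               (map (\<lambda>l. V p' m' (l div N) * U (\<sigma> p' (l div N)) (l mod N)) [0..<n p'*N]) (k * int N)
       = (if p = p' \<and> k = 0 then \<alpha> * (\<Sum>a<n p. V p m a * cnj (V p m' a)) else 0)"
proof -
  let ?G = "\<lambda>l. V p m (l div N) * U (\<sigma> p (l div N)) (l mod N)"
  let ?s' = "map (\<lambda>l. V p' m' (l div N) * U (\<sigma> p' (l div N)) (l mod N)) [0..<n p'*N]"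
  have "acorr (map ?G [0..<n p*N]) ?s' (k * int N) = (\<Sum>l<n p*N. ?G l * cnj (seqval ?s' (int l + k * int N)))"
    unfolding acorr_def by (intro sum.cong) (auto simp: seqval_map simp flip: of_nat_mult)
  also have "\<dots> = (\<Sum>a<n p. \<Sum>i<N. ?G (a*N+i) * cnj (seqval ?s' (int (a*N+i) + k * int N)))"
    by (rule sum_blocks)
  also have "\<dots> = (\<Sum>a<n p. if p = p' \<and> k = 0 then \<alpha> * (V p m a * cnj (V p m' a)) else 0)"
    by (rule sum.cong[OF refl], rule block_sum[OF N Uorth inj rng p]) simp
  also have "\<dots> = (if p = p' \<and> k = 0 then \<alpha> * (\<Sum>a<n p. V p m a * cnj (V p m' a)) else 0)"
    by (cases "p = p' \<and> k = 0") (auto simp add: sum_distrib_left)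
  finally show ?thesis .
qed

theorem theorem2:
  fixes N P :: nat
    and U :: "nat \<Rightarrow> nat \<Rightarrow> complex"
    and n :: "nat \<Rightarrow> nat"
    and \<sigma> :: "nat \<Rightarrow> nat \<Rightarrow> nat"
    and V :: "nat \<Rightarrow> nat \<Rightarrow> nat \<Rightarrow> complex"
  assumes "N \<ge> 1"
    and "unitary_like N U"
    and "\<forall>p<P. n p \<ge> 1"
    and "bij_betw (\<lambda>(p, j). \<sigma> p j) {(p, j). p < P \<and> j < n p} {..<N}"
    and "\<forall>p<P. unitary_like (n p) (V p)"
  shows "is_optimal_CO_SF N N ((\<lambda>p. n p * N) ` {..<P})
           (concat (map (\<lambda>p. map (\<lambda>m. connect (mat_row (n p) (V p) m)
                                            (map (\<lambda>j. mat_row N U (\<sigma> p j)) [0..<n p]))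
                                 [0..<n p])
                        [0..<P]))"
proof -
  have N: "N > 0" using assms(1) by simp
  obtain \<alpha> where Uorth: "\<forall>i<N. \<forall>j<N. (\<Sum>k<N. U i k * cnj (U j k)) = (if i = j then complex_of_real \<alpha> else 0)"
    using assms(2) unfolding unitary_like_def by blast
  have inj: "inj_on (\<lambda>(p,j). \<sigma> p j) {(p,j). p<P \<and> j < n p}"
    using assms(4) by (rule bij_betw_imp_inj_on)
  have rng: "\<forall>p<P. \<forall>j<n p. \<sigma> p j < N"
    using bij_betw_apply[OF assms(4)] by auto
  have Vorth: "(\<Sum>a<n p. V p i a * cnj (V p j a)) = 0" if hp: "p < P" "i < n p" "j < n p" "i \<noteq> j" for p i j
  proof -
    obtain \<beta> where "\<forall>i<n p. \<forall>j<n p. (\<Sum>k<n p. V p i k * cnj (V p j k)) = (if i = j then complex_of_real \<beta> else 0)"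
      using assms(5) hp(1) unfolding unitary_like_def by blast
    then show ?thesis using hp by simp
  qed
  define G where "G p m = map (\<lambda>l. V p m (l div N) * U (\<sigma> p (l div N)) (l mod N)) [0..<n p*N]" for p m
  define idx where "idx = concat (map (\<lambda>p. map (\<lambda>j. (p,j)) [0..<n p]) [0..<P])"
  define fam where "fam = concat (map (\<lambda>p. map (\<lambda>m. connect (mat_row (n p) (V p) m)
                                            (map (\<lambda>j. mat_row N U (\<sigma> p j)) [0..<n p]))
                                 [0..<n p]) [0..<P])"
  have fam_eq: "fam = map (\<lambda>(p,j). G p j) idx"
  proof -
    have "fam = concat (map (\<lambda>p. map (\<lambda>m. G p m) [0..<n p]) [0..<P])"
      unfolding fam_def G_def using seq_eq[OF _ N] assms(3)
      by (intro arg_cong[where f=concat] map_cong refl) auto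
    then show ?thesis unfolding idx_def by (simp add: map_concat comp_def)
  qed
  have set_idx: "set idx = {(p,j). p<P \<and> j<n p}" unfolding idx_def by auto
  have dist: "distinct idx" unfolding idx_def
  proof (induction P)
    case (Suc P)
    have "set (concat (map (\<lambda>p. map (\<lambda>j. (p,j)) [0..<n p]) [0..<P])) \<subseteq> {(p,j). p < P}" by auto
    moreover have "set (map (\<lambda>j. (P,j)) [0..<n P]) \<subseteq> {(p,j). p = P}" by auto
    ultimately have "set (concat (map (\<lambda>p. map (\<lambda>j. (p,j)) [0..<n p]) [0..<P])) \<inter> set (map (\<lambda>j. (P,j)) [0..<n P]) = {}"
      by blast
    moreover have "distinct (map (\<lambda>j. (P,j)) [0..<n P])" by (simp add: distinct_map inj_on_def)
    ultimately show ?case using Suc by (simp only: upt_Suc_append[OF le0] map_append concat_append distinct_append) simp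
  qed simp
  have len: "length idx = N"
    using distinct_card[OF dist] set_idx bij_betw_same_card[OF assms(4)] by simp
  have lenG: "length (G p j) = n p * N" for p j unfolding G_def by simp
  have nth_fam: "fam ! m = G (fst (idx ! m)) (snd (idx ! m))" "fst (idx!m) < P" "snd (idx!m) < n (fst (idx!m))"
    if "m < N" for m
  proof -
    have "idx ! m \<in> set idx" using that len by simp
    then show "fst (idx!m) < P" "snd (idx!m) < n (fst (idx!m))" using set_idx by auto
    show "fam ! m = G (fst (idx ! m)) (snd (idx ! m))"
      using that len fam_eq by (simp add: case_prod_beta)
  qed
  have "is_CO_SF N N ((\<lambda>p. n p * N) ` {..<P}) fam"
    unfolding is_CO_SF_def
  proof (intro conjI allI impI)
    show "length fam = N" using fam_eq len by simp
    show "\<forall>s\<in>set fam. N dvd length s" using fam_eq lenG by auto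
    show "(\<lambda>p. n p * N) ` {..<P} = set (map length fam)"
    proof -
      have "set (map length fam) = (\<lambda>(p,j). n p * N) ` set idx"
        using fam_eq lenG by (auto simp: image_image case_prod_beta)
      also have "\<dots> = (\<lambda>p. n p * N) ` {..<P}"
        unfolding set_idx
      proof (intro equalityI subsetI)
        fix x assume "x \<in> (\<lambda>(p,j). n p * N) ` {(p,j). p<P \<and> j<n p}"
        then show "x \<in> (\<lambda>p. n p * N) ` {..<P}" by auto
      next
        fix x assume "x \<in> (\<lambda>p. n p * N) ` {..<P}"
        then obtain p where hp: "p < P" "x = n p * N" by auto
        then have "(p,0) \<in> {(p,j). p<P \<and> j<n p}" using assms(3) by auto
        then show "x \<in> (\<lambda>(p,j). n p * N) ` {(p,j). p<P \<and> j<n p}"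
          by (rule rev_image_eqI) (simp add: hp)
      qed
      finally show ?thesis by simp
    qed
    fix m m' :: nat and k :: int
    assume m: "m < N" and m': "m' < N"
    show "acorr (fam ! m) (fam ! m') (k * int N) = (if m = m' \<and> k = 0 then energy (fam ! m) else 0)"
    proof (cases "m = m' \<and> k = 0")
      case True then show ?thesis by (simp add: energy_def)
    next
      case False
      define p where "p = fst (idx!m)"
      define j where "j = snd (idx!m)"
      define p' where "p' = fst (idx!m')"
      define j' where "j' = snd (idx!m')"
      have pj: "p < P" "j < n p" "p' < P" "j' < n p'" "fam!m = G p j" "fam!m' = G p' j'"
        using nth_fam[OF m] nth_fam[OF m'] unfolding p_def j_def p'_def j'_def by auto
      have "acorr (fam ! m) (fam ! m') (k * int N) = (if p = p' \<and> k = 0 then \<alpha> * (\<Sum>a<n p. V p j a * cnj (V p j' a)) else 0)"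
        unfolding pj(5,6) G_def by (rule acorr_blocks[OF N Uorth inj rng pj(1,3)])
      also have "\<dots> = 0"
      proof (cases "p = p' \<and> k = 0")
        case True
        then have "m \<noteq> m'" using False by auto
        then have "idx!m \<noteq> idx!m'" using nth_eq_iff_index_eq[OF dist] m m' len by auto
        then have "j \<noteq> j'" using True unfolding p_def p'_def j_def j'_def by (auto simp: prod_eq_iff)
        then show ?thesis using Vorth[of p j j'] pj True by simp
      qed auto
      finally show ?thesis using False by auto
    qed
  qed
  then show ?thesis unfolding is_optimal_CO_SF_def fam_def by simp
qed

end
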